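(* Let $q>1$ and $n>1$ be integers, let $q'\ge 2q-1$ be an integer with $q'>q$, and let $S=(s_i)$ be an $\mathcal{OS}_q(n)$ of period $m$ with ring sequence $[s_0,\ldots,s_{m-1}]$. Let $S'$ be the periodic sequence over $\mathbb{Z}_{q'}$ with ring sequence $[s_0',\ldots,s_{m-1}']$, where for $x\in\mathbb{Z}_q$, $x'$ denotes the residue class in $\mathbb{Z}_{q'}$ of the unique integer in $\{0,1,\ldots,q-1\}$ belonging to the class $x$. Then $S'$ is an $\mathcal{SOS}_{q'}(n)$.
   Context: For a periodic sequence $S=(s_i)$ over $\mathbb{Z}_q$ write $\mathbf{s}_n(i)=(s_i,\ldots,s_{i+n-1})$; for an $n$-tuple $\mathbf{u}=(u_0,\ldots,u_{n-1})$, $\mathbf{u}^R=(u_{n-1},\ldots,u_0)$ and $-\mathbf{u}=(-u_0,\ldots,-u_{n-1})$. A $q$-ary $n$-window sequence of period $m$ is a periodic sequence with $\mathbf{s}_n(i)=\mathbf{s}_n(j)\Rightarrow i\equiv j\pmod m$. An $\mathcal{OS}_q(n)$ is an $n$-window sequence with $\mathbf{s}_n(i)\neq\mathbf{s}_n(j)^R$ for all $i,j$; an $\mathcal{SOS}_q(n)$ is an $\mathcal{OS}_q(n)$ that additionally satisfies $\mathbf{s}_n(i)\neq-\mathbf{s}_n(j)^R$ for all $i,j$. The ring sequence $[a_0,\ldots,a_{m-1}]$ of a sequence of period $m$ is one period, i.e. the sequence is given by $s_{i+tm}=a_i$. *)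

theory Defs
  imports Main
begin

text \<open>A q-ary sequence is represented as a function nat => int whose values are the
canonical representatives in {0..<q} of the residue classes in Z_q.\<close>

definition is_qseq :: "int \<Rightarrow> (nat \<Rightarrow> int) \<Rightarrow> bool" where
  "is_qseq q s \<longleftrightarrow> (\<forall>i. 0 \<le> s i \<and> s i < q)"

definition periodic_seq :: "nat \<Rightarrow> (nat \<Rightarrow> int) \<Rightarrow> bool" where
  "periodic_seq m s \<longleftrightarrow> 0 < m \<and> (\<forall>i. s (i + m) = s i)"

definition window :: "(nat \<Rightarrow> int) \<Rightarrow> nat \<Rightarrow> nat \<Rightarrow> int list" where
  "window s n i = map (\<lambda>k. s (i + k)) [0..<n]"

definition neg_tuple :: "int \<Rightarrow> int list \<Rightarrow> int list" where
  "neg_tuple q u = map (\<lambda>x. (- x) mod q) u"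

definition n_window_seq :: "int \<Rightarrow> nat \<Rightarrow> nat \<Rightarrow> (nat \<Rightarrow> int) \<Rightarrow> bool" where
  "n_window_seq q n m s \<longleftrightarrow> is_qseq q s \<and> periodic_seq m s \<and>
     (\<forall>i j. window s n i = window s n j \<longrightarrow> i mod m = j mod m)"

definition OS :: "int \<Rightarrow> nat \<Rightarrow> nat \<Rightarrow> (nat \<Rightarrow> int) \<Rightarrow> bool" where
  "OS q n m s \<longleftrightarrow> n_window_seq q n m s \<and>
     (\<forall>i j. window s n i \<noteq> rev (window s n j))"

definition SOS :: "int \<Rightarrow> nat \<Rightarrow> nat \<Rightarrow> (nat \<Rightarrow> int) \<Rightarrow> bool" where
  "SOS q n m s \<longleftrightarrow> OS q n m s \<and>
     (\<forall>i j. window s n i \<noteq> neg_tuple q (rev (window s n j)))"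

end

theory Submission
  imports Defs
begin

lemma neg_aux:
  fixes q q' x y :: int
  assumes "0 \<le> x" "x < q" "0 \<le> y" "y < q" "q' \<ge> 2 * q - 1" "q' > q"
    and "y = (- x) mod q'"
  shows "y = x"
proof (cases "x = 0")
  case True thus ?thesis using assms by simp
next
  case False
  then have "(- x) mod q' = q' - x"
  proof -
    have "(- x) mod q' = (q' - x) mod q'" by (metis minus_mod_self1)
    also have "... = q' - x" using assms False by (intro mod_pos_pos_trivial) auto
    finally show ?thesis .
  qed
  thus ?thesis using assms by simp
qed

theorem theorem3p2:
  fixes q q' :: int and n m :: nat and s :: "nat \<Rightarrow> int"
  assumes "q > 1" and "n > 1" and "q' \<ge> 2 * q - 1" and "q' > q"
    and "OS q n m s"
  shows "SOS q' n m (\<lambda>i. s i mod q')"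
proof -
  have rng: "\<And>i. 0 \<le> s i \<and> s i < q" using assms(5)
    unfolding OS_def n_window_seq_def is_qseq_def by blast
  have eq: "(\<lambda>i. s i mod q') = s"
    using rng assms(4) by (intro ext) (meson mod_pos_pos_trivial order_less_trans)
  have os: "OS q' n m s"
    using assms(5) rng assms(4) unfolding OS_def n_window_seq_def is_qseq_def
    by (meson order_less_trans)
  have "window s n i \<noteq> neg_tuple q' (rev (window s n j))" for i j
  proof
    assume h: "window s n i = neg_tuple q' (rev (window s n j))"
    have "window s n i = rev (window s n j)"
    proof (rule nth_equalityI)
      show "length (window s n i) = length (rev (window s n j))"
        using h by (simp add: neg_tuple_def)
      fix k assume k: "k < length (window s n i)"
      hence kn: "k < n" by (simp add: window_def)
      have a: "window s n i ! k = s (i + k)" using kn by (simp add: window_def)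
      have b: "rev (window s n j) ! k = s (j + (n - 1 - k))"
        using kn by (simp add: window_def rev_nth)
      have c: "window s n i ! k = (- (rev (window s n j) ! k)) mod q'"
        using h kn by (simp add: neg_tuple_def window_def)
      show "window s n i ! k = rev (window s n j) ! k"
        unfolding a b using c a b neg_aux[OF _ _ _ _ assms(3) assms(4)] rng by metis
    qed
    thus False using assms(5) unfolding OS_def by blast
  qed
  thus ?thesis unfolding eq SOS_def using os by blast
qed

end
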